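(* Let $G=(V,E)$ be a finite graph with no isolated vertices, with adjacency matrix $A$, degree matrix $D=\mathrm{diag}(d_u)$ and Laplacian $L=D-A$. Let $\boldsymbol\beta,\boldsymbol\gamma,\boldsymbol\lambda\in\mathbb R^V$ be such that $G$ has local $(\boldsymbol\beta,\boldsymbol\gamma,\boldsymbol\lambda)$-occupancy and for all $u\in V$: \[ \beta_u,\gamma_u,\lambda_u>0,\qquad d_u\frac{\gamma_u}{\beta_u}<1,\qquad \sum_{v\in N(u)}\frac{\gamma_v}{\beta_v}\le 1. \] Let $B=\mathrm{diag}(\boldsymbol\beta)$, $\Gamma=\mathrm{diag}(\boldsymbol\gamma)$ and $H=B+D\Gamma$. Then $B+A\Gamma$ is invertible, the vector $\mathbf y'=(B+A\Gamma)^{-1}\mathbf 1$ satisfies $\mathbf y'\ge\mathbf 0$ and $(B+A\Gamma)\mathbf y'\le\mathbf 1$ (i.e. it is feasible for the LP $\max\{\mathbf 1^{\mathsf T}\mathbf y:\ \mathbf y\ge\mathbf 0,\ (B+A\Gamma)\mathbf y\le\mathbf 1\}$), and moreover the spectral radius satisfies $\rho(L\Gamma H^{-1})<1$.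
   Context: Given $\boldsymbol\beta,\boldsymbol\gamma,\boldsymbol\lambda\in[0,\infty)^V$, $G$ has local $(\boldsymbol\beta,\boldsymbol\gamma,\boldsymbol\lambda)$-occupancy if for each $u\in V$, $\beta_u\Pr_{G,\boldsymbol\lambda}(u\in X)+\gamma_u\sum_{v\in N_G(u)}\Pr_{G,\boldsymbol\lambda}(v\in X)\ge1$, where $X$ is drawn from the hard-core model $\Pr_{G,\boldsymbol\lambda}(I)\propto\prod_{v\in I}\lambda_v$ on independent sets $I$ of $G$. Vector inequalities are entrywise; $\rho(T)$ is the maximum absolute value of an eigenvalue of $T$. *)

theory Defs
  imports "HOL-Analysis.Analysis"
begin

definition simple_graph :: "('v::finite \<Rightarrow> 'v \<Rightarrow> bool) \<Rightarrow> bool" where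
  "simple_graph E \<longleftrightarrow> (\<forall>u v. E u v \<longrightarrow> E v u) \<and> (\<forall>u. \<not> E u u)"

definition nbhd :: "('v \<Rightarrow> 'v \<Rightarrow> bool) \<Rightarrow> 'v \<Rightarrow> 'v set" where
  "nbhd E u = {v. E u v}"

definition degree :: "('v \<Rightarrow> 'v \<Rightarrow> bool) \<Rightarrow> 'v \<Rightarrow> nat" where
  "degree E u = card (nbhd E u)"

definition independent :: "('v \<Rightarrow> 'v \<Rightarrow> bool) \<Rightarrow> 'v set \<Rightarrow> bool" where
  "independent E I \<longleftrightarrow> (\<forall>u\<in>I. \<forall>v\<in>I. \<not> E u v)"

definition hc_weight :: "('v \<Rightarrow> real) \<Rightarrow> 'v set \<Rightarrow> real" where
  "hc_weight lam I = (\<Prod>v\<in>I. lam v)"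

definition hc_Z :: "('v::finite \<Rightarrow> 'v \<Rightarrow> bool) \<Rightarrow> ('v \<Rightarrow> real) \<Rightarrow> real" where
  "hc_Z E lam = (\<Sum>I\<in>{I. independent E I}. hc_weight lam I)"

definition hc_prob :: "('v::finite \<Rightarrow> 'v \<Rightarrow> bool) \<Rightarrow> ('v \<Rightarrow> real) \<Rightarrow> 'v \<Rightarrow> real" where
  "hc_prob E lam u = (\<Sum>I\<in>{I. independent E I \<and> u \<in> I}. hc_weight lam I) / hc_Z E lam"

definition local_occupancy ::
  "('v::finite \<Rightarrow> 'v \<Rightarrow> bool) \<Rightarrow> ('v \<Rightarrow> real) \<Rightarrow> ('v \<Rightarrow> real) \<Rightarrow> ('v \<Rightarrow> real) \<Rightarrow> bool" where
  "local_occupancy E beta gamma lam \<longleftrightarrow>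
     (\<forall>u. beta u * hc_prob E lam u + gamma u * (\<Sum>v\<in>nbhd E u. hc_prob E lam v) \<ge> 1)"

definition adj_mat :: "('v::finite \<Rightarrow> 'v \<Rightarrow> bool) \<Rightarrow> real^'v^'v" where
  "adj_mat E = (\<chi> i j. if E i j then 1 else 0)"

definition diag_mat :: "('v::finite \<Rightarrow> real) \<Rightarrow> real^'v^'v" where
  "diag_mat f = (\<chi> i j. if i = j then f i else 0)"

definition deg_mat :: "('v::finite \<Rightarrow> 'v \<Rightarrow> bool) \<Rightarrow> real^'v^'v" where
  "deg_mat E = diag_mat (\<lambda>u. real (degree E u))"

definition laplacian :: "('v::finite \<Rightarrow> 'v \<Rightarrow> bool) \<Rightarrow> real^'v^'v" where
  "laplacian E = deg_mat E - adj_mat E"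

definition cmat :: "real^'n^'m \<Rightarrow> complex^'n^'m" where
  "cmat T = (\<chi> i j. complex_of_real (T$i$j))"

definition spec_radius :: "real^'n::finite^'n \<Rightarrow> real" where
  "spec_radius T = Max {cmod z | z. det (mat z - cmat T) = 0}"

end

theory Submission imports Defs "HOL-Computational_Algebra.Fundamental_Theorem_Algebra" begin

lemma charpoly_exists:
  fixes C :: "complex^'n^'n"
  shows "\<exists>P. (\<forall>z. poly P z = det (mat z - C)) \<and> Polynomial.degree P = CARD('n)"
proof -
  define Q :: "complex poly^'n^'n" where
    "Q = (\<chi> i j. if i = j then [:- C$i$j, 1:] else [:- C$i$j:])"
  define P where "P = det Q"
  have "poly P z = det (mat z - C)" for z
    unfolding P_def det_def poly_sum poly_prod
    by (auto simp: Q_def mat_def poly_prod intro!: sum.cong prod.cong)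
  moreover have "Polynomial.degree P = CARD('n)"
  proof -
    let ?t = "\<lambda>p. of_int (sign p) * prod (\<lambda>i. Q$i$p i) (UNIV :: 'n set)"
    let ?S = "{p. p permutes (UNIV :: 'n set)}"
    have fin: "finite ?S" by (simp add: finite_permutations)
    have P_split: "P = ?t id + sum ?t (?S - {id})"
      unfolding P_def det_def
      by (subst sum.remove[OF fin, of id]) (auto simp: permutes_id)
    have tid: "?t id = (\<Prod>i\<in>UNIV. [:- C$i$i, 1:])"
      by (simp add: sign_id Q_def)
    have did: "Polynomial.degree (?t id) = CARD('n)"
      unfolding tid by (subst degree_prod_eq_sum_degree) auto
    have cid: "coeff (?t id) (CARD('n)) = 1"
      using lead_coeff_prod[of "\<lambda>i. [:- C$i$i, 1:]" UNIV] did tid by simp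
    have dQ: "Polynomial.degree (Q$i$j) \<le> 1" for i j by (simp add: Q_def)
    have "Polynomial.degree (?t p) < CARD('n)" if p: "p \<in> ?S - {id}" for p
    proof -
      from p obtain i where i: "p i \<noteq> i" by (auto simp: fun_eq_iff)
      have "Polynomial.degree (prod (\<lambda>i. Q$i$p i) UNIV) \<le> sum (Polynomial.degree \<circ> (\<lambda>i. Q$i$p i)) UNIV"
        by (rule degree_prod_sum_le) simp
      also have "\<dots> = Polynomial.degree (Q$i$p i) + sum (Polynomial.degree \<circ> (\<lambda>i. Q$i$p i)) (UNIV - {i})"
        by (subst sum.remove[of _ i]) auto
      also have "Polynomial.degree (Q$i$p i) = 0" using i by (simp add: Q_def)
      also have "sum (Polynomial.degree \<circ> (\<lambda>i. Q$i$p i)) (UNIV - {i}) \<le> sum (\<lambda>_. 1) (UNIV - {i})"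
        using dQ by (intro sum_mono) (simp add: One_nat_def)
      also have "\<dots> < CARD('n)" by (simp add: card_Diff_singleton)
      finally have "Polynomial.degree (prod (\<lambda>i. Q$i$p i) UNIV) < CARD('n)" by simp
      moreover have "Polynomial.degree (?t p) \<le> Polynomial.degree (prod (\<lambda>i. Q$i$p i) UNIV)"
        by (rule order_trans[OF degree_mult_le]) (simp add: of_int_poly)
      ultimately show ?thesis by linarith
    qed
    hence "Polynomial.degree (sum ?t (?S - {id})) < CARD('n)"
      using degree_sum_le[of "?S - {id}" ?t "CARD('n) - 1"] fin
      by (metis (no_types, lifting) Suc_pred' finite_Diff less_Suc_eq_le zero_less_card_finite finite_UNIV_card_ge_0 less_trans_Suc)
    thus ?thesis unfolding P_split using did by (subst degree_add_eq_left) auto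
  qed
  ultimately show ?thesis by blast
qed

lemma spec_lt1:
  fixes K :: "real^'n^'n"
  assumes col: "\<And>v. (\<Sum>u\<in>UNIV. \<bar>K$u$v\<bar>) < 1"
  shows "spec_radius K < 1"
proof -
  have eig: "cmod z < 1" if det0: "det (mat z - cmat K) = 0" for z
  proof -
    let ?N = "mat z - cmat K"
    have "\<not> invertible ?N" using det0 invertible_det_nz by blast
    then obtain x where x0: "?N *v x = 0" and xnz: "x \<noteq> 0"
      using invertible_left_inverse matrix_left_invertible_ker by metis
    have comp: "z * x$u = (\<Sum>v\<in>UNIV. of_real (K$u$v) * x$v)" for u
    proof -
      have "(?N *v x)$u = 0" using x0 by simp
      moreover have "(?N *v x)$u = z * x$u - (\<Sum>v\<in>UNIV. of_real (K$u$v) * x$v)"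
      proof -
        have "(?N *v x)$u = (\<Sum>j\<in>UNIV. (if u = j then z * x$j else 0) - of_real (K$u$j) * x$j)"
          unfolding matrix_vector_mult_def by (auto simp: mat_def cmat_def left_diff_distrib intro!: sum.cong)
        also have "\<dots> = z * x$u - (\<Sum>v\<in>UNIV. of_real (K$u$v) * x$v)"
          by (simp add: sum_subtractf sum.delta)
        finally show ?thesis .
      qed
      ultimately show ?thesis by simp
    qed
    have rowb: "cmod z * cmod (x$u) \<le> (\<Sum>v\<in>UNIV. \<bar>K$u$v\<bar> * cmod (x$v))" for u
    proof -
      have "cmod z * cmod (x$u) = cmod (\<Sum>v\<in>UNIV. of_real (K$u$v) * x$v)"
        by (simp add: comp[symmetric] norm_mult)
      also have "\<dots> \<le> (\<Sum>v\<in>UNIV. cmod (of_real (K$u$v) * x$v))" by (rule norm_sum)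
      also have "\<dots> = (\<Sum>v\<in>UNIV. \<bar>K$u$v\<bar> * cmod (x$v))" by (simp add: norm_mult)
      finally show ?thesis .
    qed
    define S where "S = (\<Sum>v\<in>UNIV. cmod (x$v))"
    obtain w where w: "x$w \<noteq> 0" using xnz by (metis vec_eq_iff zero_index)
    have "cmod z * S = (\<Sum>u\<in>UNIV. cmod z * cmod (x$u))" by (simp add: S_def sum_distrib_left)
    also have "\<dots> \<le> (\<Sum>u\<in>UNIV. \<Sum>v\<in>UNIV. \<bar>K$u$v\<bar> * cmod (x$v))" by (intro sum_mono rowb)
    also have "\<dots> = (\<Sum>v\<in>UNIV. (\<Sum>u\<in>UNIV. \<bar>K$u$v\<bar>) * cmod (x$v))"
      by (subst sum.swap) (simp add: sum_distrib_right)
    also have "\<dots> < S" unfolding S_def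
    proof (rule sum_strict_mono_ex1)
      show "\<forall>v\<in>UNIV. (\<Sum>u\<in>UNIV. \<bar>K$u$v\<bar>) * cmod (x$v) \<le> cmod (x$v)"
        using col by (simp add: mult_left_le_one_le less_imp_le)
      show "\<exists>v\<in>UNIV. (\<Sum>u\<in>UNIV. \<bar>K$u$v\<bar>) * cmod (x$v) < cmod (x$v)"
        using col[of w] w by (intro bexI[of _ w]) (auto simp: mult_less_cancel_right2)
    qed simp
    finally have "cmod z * S < 1 * S" by simp
    moreover have "S \<ge> 0" unfolding S_def by (simp add: sum_nonneg)
    ultimately show ?thesis by (metis mult_right_less_imp_less)
  qed
  obtain P where P: "\<And>z. poly P z = det (mat z - cmat K)" and dP: "Polynomial.degree P = CARD('n)"
    using charpoly_exists[of "cmat K"] by blast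
  have Pnz: "P \<noteq> 0" using dP by (metis degree_0 zero_less_card_finite less_irrefl)
  have R: "{z. det (mat z - cmat K) = 0} = {z. poly P z = 0}" using P by simp
  have fin: "finite {z. det (mat z - cmat K) = 0}" unfolding R by (rule poly_roots_finite[OF Pnz])
  have "\<not> constant (poly P)" using dP constant_degree by (metis zero_less_card_finite less_irrefl)
  then obtain z0 where "poly P z0 = 0" using fundamental_theorem_of_algebra by blast
  hence ne: "{z. det (mat z - cmat K) = 0} \<noteq> {}" using P by auto
  have eq: "{cmod z | z. det (mat z - cmat K) = 0} = cmod ` {z. det (mat z - cmat K) = 0}" by auto
  show ?thesis unfolding spec_radius_def eq
    using fin ne eig by (subst Max_less_iff) auto
qed

lemma diag_right: "(X ** diag_mat f) $ i $ j = X $ i $ j * f j"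
  by (simp add: matrix_matrix_mult_def diag_mat_def if_distrib[of "(*) _"] sum.delta' cong: if_cong)

lemma diag_left: "(diag_mat f ** X) $ i $ j = f i * X $ i $ j"
proof -
  have "(diag_mat f ** X) $ i $ j = (\<Sum>k\<in>UNIV. if i = k then f i * X$i$j else 0)"
    unfolding matrix_matrix_mult_def diag_mat_def
    by (simp, subst sum.cong[OF refl, where h="\<lambda>k. if i = k then f i * X$i$j else 0"]) auto
  thus ?thesis by simp
qed

lemma card_in_nbhd:
  assumes "simple_graph E"
  shows "card {u. E u v} = degree E v"
proof -
  have "{u. E u v} = nbhd E v" using assms by (auto simp: simple_graph_def nbhd_def)
  thus ?thesis by (simp add: degree_def)
qed

lemma sum_if_E:
  fixes E :: "'v::finite \<Rightarrow> 'v \<Rightarrow> bool"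
  shows "(\<Sum>u\<in>UNIV. if E u v then (a::real) else 0) = real (card {u. E u v}) * a"
proof -
  have "(\<Sum>u\<in>UNIV. if E u v then a else 0) = (\<Sum>u\<in>{u\<in>UNIV. E u v}. a)"
    by (subst sum.inter_filter) auto
  thus ?thesis by simp
qed

lemma sum_nbhd_if:
  fixes E :: "'v::finite \<Rightarrow> 'v \<Rightarrow> bool"
  shows "(\<Sum>v\<in>nbhd E u. f v) = (\<Sum>v\<in>UNIV. if E u v then f v else (0::real))"
  unfolding nbhd_def using sum.inter_filter[of UNIV f "E u"] by simp

lemma nbhd_swap:
  fixes E :: "'v::finite \<Rightarrow> 'v \<Rightarrow> bool"
  assumes "simple_graph E"
  shows "(\<Sum>u\<in>UNIV. \<Sum>v\<in>nbhd E u. f v) = (\<Sum>v\<in>UNIV. real (degree E v) * (f v::real))"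
proof -
  have "(\<Sum>u\<in>UNIV. \<Sum>v\<in>nbhd E u. f v) = (\<Sum>u\<in>UNIV. \<Sum>v\<in>UNIV. if E u v then f v else 0)"
    by (simp add: sum_nbhd_if)
  also have "\<dots> = (\<Sum>v\<in>UNIV. \<Sum>u\<in>UNIV. if E u v then f v else 0)" by (rule sum.swap)
  also have "\<dots> = (\<Sum>v\<in>UNIV. real (degree E v) * f v)"
    by (simp add: sum_if_E card_in_nbhd[OF assms])
  finally show ?thesis .
qed

lemma matrix_inv_props:
  fixes A :: "'a::field^'n^'n"
  assumes "invertible A"
  shows "A ** matrix_inv A = mat 1 \<and> matrix_inv A ** A = mat 1"
  using assms unfolding invertible_def matrix_inv_def by (rule someI_ex)

lemma matrix_inv_eq:
  fixes A :: "'a::field^'n^'n"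
  assumes "A ** X = mat 1"
  shows "matrix_inv A = X"
proof -
  have inv: "invertible A" using assms invertible_right_inverse by blast
  have "matrix_inv A = matrix_inv A ** (A ** X)" using assms by simp
  also have "\<dots> = (matrix_inv A ** A) ** X" by (simp add: matrix_mul_assoc)
  also have "\<dots> = X" using matrix_inv_props[OF inv] by simp
  finally show ?thesis .
qed


lemma sum_le0_all0:
  fixes F :: "'v::finite \<Rightarrow> real"
  assumes "sum F UNIV \<le> 0" "\<forall>v\<in>UNIV. 0 \<le> F v"
  shows "F v = 0"
proof -
  have "sum F UNIV = 0" using assms by (meson antisym sum_nonneg)
  thus ?thesis using sum_nonneg_eq_0_iff[of UNIV F] assms by auto
qed

theorem lemma2p3:
  fixes E :: "'v::finite \<Rightarrow> 'v \<Rightarrow> bool"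
    and beta gamma lam :: "'v \<Rightarrow> real"
  assumes "simple_graph E"
    and "\<forall>u. \<exists>v. E u v"
    and "local_occupancy E beta gamma lam"
    and "\<forall>u. beta u > 0 \<and> gamma u > 0 \<and> lam u > 0"
    and "\<forall>u. real (degree E u) * (gamma u / beta u) < 1"
    and "\<forall>u. (\<Sum>v\<in>nbhd E u. gamma v / beta v) \<le> 1"
  shows "let B = diag_mat beta; \<Gamma> = diag_mat gamma; A = adj_mat E;
             H = B + deg_mat E ** \<Gamma>; M = B + A ** \<Gamma>;
             y' = matrix_inv M *v (\<chi> i. 1)
         in invertible M \<and> (\<forall>i. y' $ i \<ge> 0) \<and> (\<forall>i. (M *v y') $ i \<le> 1)
            \<and> spec_radius (laplacian E ** \<Gamma> ** matrix_inv H) < 1"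
proof -
  note sg = assms(1)
  have bpos: "\<And>u. beta u > 0" and gpos: "\<And>u. gamma u > 0" using assms(4) by auto
  have bne: "\<And>u. beta u \<noteq> 0" using bpos by (metis less_irrefl)
  define d where "d u = real (degree E u)" for u
  have dge: "d u \<ge> 0" for u by (simp add: d_def)
  have dg: "d u * gamma u < beta u" for u
  proof -
    have "real (degree E u) * (gamma u / beta u) < 1" using assms(5) by blast
    thus ?thesis using bpos[of u] by (simp add: d_def field_simps)
  qed
  have nbs: "(\<Sum>v\<in>nbhd E u. gamma v / beta v) \<le> 1" for u using assms(6) by auto
  have noloop: "\<not> E u u" for u using sg by (simp add: simple_graph_def)
  define M where "M = diag_mat beta + adj_mat E ** diag_mat gamma"
  define H where "H = diag_mat beta + deg_mat E ** diag_mat gamma"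
  define y where "y = matrix_inv M *v ((\<chi> i. 1) :: real^'v)"
  have Mv: "(M *v x) $ u = beta u * x$u + (\<Sum>v\<in>nbhd E u. gamma v * x$v)" for x u
  proof -
    have "(M *v x) $ u = (\<Sum>j\<in>UNIV. (if u = j then beta u * x$j else 0) + (if E u j then gamma j * x$j else 0))"
      unfolding matrix_vector_mult_def M_def
      by (simp add: diag_right, intro sum.cong) (auto simp: diag_mat_def adj_mat_def distrib_right)
    also have "\<dots> = beta u * x$u + (\<Sum>v\<in>nbhd E u. gamma v * x$v)"
      by (simp add: sum.distrib sum_nbhd_if)
    finally show ?thesis .
  qed
  have ker: "x = 0" if Mx: "M *v x = 0" for x
  proof -
    have row: "beta u * \<bar>x$u\<bar> \<le> (\<Sum>v\<in>nbhd E u. gamma v * \<bar>x$v\<bar>)" for u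
    proof -
      have "beta u * x$u = - (\<Sum>v\<in>nbhd E u. gamma v * x$v)" using Mv[of x u] Mx by simp
      hence "beta u * \<bar>x$u\<bar> = \<bar>\<Sum>v\<in>nbhd E u. gamma v * x$v\<bar>"
        using bpos[of u] by (metis abs_minus_cancel abs_mult abs_of_pos)
      also have "\<dots> \<le> (\<Sum>v\<in>nbhd E u. \<bar>gamma v * x$v\<bar>)" by (rule sum_abs)
      also have "\<dots> = (\<Sum>v\<in>nbhd E u. gamma v * \<bar>x$v\<bar>)"
        using gpos by (simp add: abs_mult less_imp_le)
      finally show ?thesis .
    qed
    have "(\<Sum>u\<in>UNIV. beta u * \<bar>x$u\<bar>) \<le> (\<Sum>u\<in>UNIV. \<Sum>v\<in>nbhd E u. gamma v * \<bar>x$v\<bar>)"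
      by (intro sum_mono row)
    also have "\<dots> = (\<Sum>v\<in>UNIV. d v * (gamma v * \<bar>x$v\<bar>))"
      by (simp add: nbhd_swap[OF sg] d_def)
    finally have "(\<Sum>v\<in>UNIV. (beta v - d v * gamma v) * \<bar>x$v\<bar>) \<le> 0"
      by (simp add: left_diff_distrib sum_subtractf mult.assoc)
    moreover have nn: "\<forall>v\<in>UNIV. 0 \<le> (beta v - d v * gamma v) * \<bar>x$v\<bar>"
      using dg by (simp add: less_imp_le)
    ultimately have F0: "(beta v - d v * gamma v) * \<bar>x$v\<bar> = 0" for v
      by (rule sum_le0_all0)
    have "x$v = 0" for v using F0[of v] dg[of v] by auto
    thus ?thesis by (simp add: vec_eq_iff)
  qed
  have invM: "invertible M"
    using ker invertible_left_inverse matrix_left_invertible_ker by metis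
  have My: "M *v y = (\<chi> i. 1)"
    unfolding y_def using matrix_inv_props[OF invM]
    by (simp add: matrix_vector_mul_assoc)
  have ynn: "y$i \<ge> 0" for i
  proof -
    define c where "c v = gamma v / beta v" for v
    define z where "z v = beta v * y$v" for v
    define w where "w v = max 0 (min 1 (z v))" for v
    have cnn: "c v \<ge> 0" for v using bpos gpos by (simp add: c_def less_imp_le)
    have zeq: "z u + (\<Sum>v\<in>nbhd E u. c v * z v) = 1" for u
    proof -
      have "(\<Sum>v\<in>nbhd E u. c v * z v) = (\<Sum>v\<in>nbhd E u. gamma v * y$v)"
        using bpos by (intro sum.cong) (auto simp: c_def z_def bne)
      thus ?thesis using Mv[of y u] My by (simp add: z_def)
    qed
    have row: "\<bar>z u - w u\<bar> \<le> (\<Sum>v\<in>nbhd E u. c v * \<bar>z v - w v\<bar>)" for u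
    proof -
      define t where "t = 1 - (\<Sum>v\<in>nbhd E u. c v * w v)"
      have "(\<Sum>v\<in>nbhd E u. c v * w v) \<le> (\<Sum>v\<in>nbhd E u. c v)"
        using cnn by (intro sum_mono) (auto simp: w_def mult_left_le)
      hence t0: "t \<ge> 0" using nbs[of u] by (simp add: t_def c_def)
      have "(\<Sum>v\<in>nbhd E u. c v * w v) \<ge> 0"
        using cnn by (intro sum_nonneg) (auto simp: w_def)
      hence t1: "t \<le> 1" by (simp add: t_def)
      have "\<bar>z u - w u\<bar> \<le> \<bar>z u - t\<bar>" using t0 t1 by (auto simp: w_def)
      also have "z u - t = - (\<Sum>v\<in>nbhd E u. c v * (z v - w v))"
        using zeq[of u] by (simp add: t_def right_diff_distrib sum_subtractf)
      also have "\<bar>- (\<Sum>v\<in>nbhd E u. c v * (z v - w v))\<bar> \<le> (\<Sum>v\<in>nbhd E u. \<bar>c v * (z v - w v)\<bar>)"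
        by (simp only: abs_minus_cancel sum_abs)
      also have "\<dots> = (\<Sum>v\<in>nbhd E u. c v * \<bar>z v - w v\<bar>)"
        using cnn by (simp add: abs_mult)
      finally show ?thesis .
    qed
    have "(\<Sum>u\<in>UNIV. \<bar>z u - w u\<bar>) \<le> (\<Sum>u\<in>UNIV. \<Sum>v\<in>nbhd E u. c v * \<bar>z v - w v\<bar>)"
      by (intro sum_mono row)
    also have "\<dots> = (\<Sum>v\<in>UNIV. d v * (c v * \<bar>z v - w v\<bar>))"
      by (simp add: nbhd_swap[OF sg] d_def)
    finally have "(\<Sum>v\<in>UNIV. (1 - d v * c v) * \<bar>z v - w v\<bar>) \<le> 0"
      by (simp add: left_diff_distrib sum_subtractf mult.assoc)
    moreover have dc: "d v * c v < 1" for v using assms(5) by (simp add: d_def c_def)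
    hence "\<forall>v\<in>UNIV. 0 \<le> (1 - d v * c v) * \<bar>z v - w v\<bar>"
      by (simp add: less_imp_le)
    ultimately have F0: "(1 - d v * c v) * \<bar>z v - w v\<bar> = 0" for v
      by (rule sum_le0_all0)
    have "z i = w i" using F0[of i] dc[of i] by auto
    hence "z i \<ge> 0" by (simp add: w_def)
    thus ?thesis using bpos[of i] by (simp add: z_def zero_le_mult_iff)
  qed
  define h where "h u = beta u + d u * gamma u" for u
  have hpos: "h u > 0" for u using bpos[of u] gpos[of u] dge[of u] by (simp add: h_def add_pos_nonneg)
  have Hd: "H = diag_mat h"
    by (simp add: vec_eq_iff H_def diag_right, auto simp: deg_mat_def diag_mat_def h_def d_def)
  have Hinv: "matrix_inv H = diag_mat (\<lambda>u. 1 / h u)"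
  proof (unfold Hd, intro matrix_inv_eq)
    have hne: "h u \<noteq> 0" for u using hpos[of u] by simp
    show "diag_mat h ** diag_mat (\<lambda>u. 1 / h u) = mat 1"
      by (simp add: vec_eq_iff diag_right) (simp add: mat_def diag_mat_def hne)
  qed
  define K where "K = laplacian E ** diag_mat gamma ** matrix_inv H"
  have Kuv: "K$u$v = ((if u = v then d v else 0) - (if E u v then 1 else 0)) * (gamma v / h v)" for u v
    by (simp add: K_def Hinv diag_right) (simp add: laplacian_def deg_mat_def diag_mat_def adj_mat_def d_def)
  have col: "(\<Sum>u\<in>UNIV. \<bar>K$u$v\<bar>) < 1" for v
  proof -
    have "(\<Sum>u\<in>UNIV. \<bar>K$u$v\<bar>) = (\<Sum>u\<in>UNIV. ((if u = v then d v else 0) + (if E u v then 1 else 0)) * (gamma v / h v))"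
      using hpos[of v] gpos[of v] dge[of v] noloop[of v]
      by (intro sum.cong) (auto simp: Kuv abs_mult)
    also have "\<dots> = (\<Sum>u\<in>UNIV. (if u = v then d v else 0) + (if E u v then 1 else 0)) * (gamma v / h v)"
      by (rule sum_distrib_right[symmetric])
    also have "(\<Sum>u\<in>UNIV. (if u = v then d v else 0) + (if E u v then 1 else 0)) = d v + d v"
      unfolding sum.distrib using sum_if_E[of E v 1] card_in_nbhd[OF sg, of v] by (simp add: d_def)
    also have "(d v + d v) * (gamma v / h v) < 1"
      using hpos[of v] dg[of v] by (simp add: h_def field_simps)
    finally show ?thesis .
  qed
  have "spec_radius K < 1" by (rule spec_lt1[OF col])
  thus ?thesis
    using invM ynn My unfolding Let_def M_def[symmetric] H_def[symmetric] y_def[symmetric] K_def[symmetric]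
    by simp
qed

end
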